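(* Let $X$ be a nonempty compact metric space, $Y$ a compact metric space with metric $d_Y$ and $\mathcal Y$ an $(X)$-regularizing family for $Y$. Order $\mathcal Y$ as a sequence $(Y_n)_{n\ge1}$. Let $(Z_n)_{n\ge0}$ be a sequence of distinct members of $\mathcal Y$ such that: (0) $Z_0$ is arbitrary; (1) $Z_1\ne Y_1$, $\mathrm{diam}(Z_1)<\tfrac12\mathrm{diam}(Z_0)$ and $Z_1\subset N_{\mathrm{diam}(Z_0)}(Z_0)$; (2) for each $n\ge1$, $Z_{n+1}\ne Y_{n+1}$, $\mathrm{diam}(Z_{n+1})<\tfrac12\mathrm{diam}(Z_n)$ and $Z_{n+1}\subset N_{d_n}(Z_n)$, where $$d_n=\min\Big(\mathrm{diam}(Z_n),\tfrac13 d_Y(Y_n,Z_n),\tfrac1{3^2}d_Y(Y_{n-1},Z_{n-1}),\dots,\tfrac1{3^n}d_Y(Y_1,Z_1)\Big).$$ Then $(Z_n)$ converges, and its limit point $p=\lim_nZ_n$ belongs to $Y\setminus\bigcup\mathcal Y$.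
   Context: An $(X)$-regularizing family for $Y$ is a countably infinite family $\mathcal Y$ of subsets of $Y$ such that: (a1) the members are pairwise disjoint subspaces homeomorphic to $X$; (a2) $\mathcal Y$ is null (for every $\varepsilon>0$ only finitely many members have diameter $\ge\varepsilon$); (a3) each member has dense complement in $Y$; (a4) $\bigcup\mathcal Y$ is dense in $Y$; (a5) any two points not in a common member of $\mathcal Y$ are separated by an open, closed, $\mathcal Y$-saturated subset of $Y$. Notation: $N_\varepsilon(A)=\{x\in Y:d_Y(x,A)<\varepsilon\}$; $d_Y(A,B)=\inf\{d_Y(a,b):a\in A,b\in B\}$. A sequence of pairwise distinct members $Z_n$ of $\mathcal Y$ converges to $p$ if $p_n\to p$ for any choice $p_n\in Z_n$. *)

theory Defs
  imports "HOL-Analysis.Analysis"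
begin

definition nbhd :: "'a::metric_space set \<Rightarrow> real \<Rightarrow> 'a set \<Rightarrow> 'a set" where
  "nbhd Y \<epsilon> A = {x \<in> Y. infdist x A < \<epsilon>}"

definition saturated :: "'a set set \<Rightarrow> 'a set \<Rightarrow> bool" where
  "saturated F U \<longleftrightarrow> (\<forall>A\<in>F. A \<inter> U \<noteq> {} \<longrightarrow> A \<subseteq> U)"

definition regularizing_family ::
  "'b::metric_space set \<Rightarrow> 'a::metric_space set \<Rightarrow> 'a set set \<Rightarrow> bool" where
  "regularizing_family X Y F \<longleftrightarrow>
     countable F \<and> infinite F \<and> (\<forall>A\<in>F. A \<subseteq> Y) \<and>
     \<comment> \<open>(a1)\<close>
     pairwise disjnt F \<and> (\<forall>A\<in>F. A homeomorphic X) \<and>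
     \<comment> \<open>(a2)\<close>
     (\<forall>\<epsilon>>0. finite {A\<in>F. diameter A \<ge> \<epsilon>}) \<and>
     \<comment> \<open>(a3)\<close>
     (\<forall>A\<in>F. Y \<subseteq> closure (Y - A)) \<and>
     \<comment> \<open>(a4)\<close>
     Y \<subseteq> closure (\<Union>F) \<and>
     \<comment> \<open>(a5)\<close>
     (\<forall>x\<in>Y. \<forall>y\<in>Y. x \<noteq> y \<and> \<not> (\<exists>A\<in>F. x \<in> A \<and> y \<in> A) \<longrightarrow>
        (\<exists>U. openin (top_of_set Y) U \<and> closedin (top_of_set Y) U \<and>
             saturated F U \<and> x \<in> U \<and> y \<notin> U))"

definition sets_converge_to :: "(nat \<Rightarrow> 'a::metric_space set) \<Rightarrow> 'a \<Rightarrow> bool" where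
  "sets_converge_to Z p \<longleftrightarrow> (\<forall>q. (\<forall>n. q n \<in> Z n) \<longrightarrow> q \<longlonglongrightarrow> p)"

definition dseq :: "(nat \<Rightarrow> 'a::metric_space set) \<Rightarrow> (nat \<Rightarrow> 'a set) \<Rightarrow> nat \<Rightarrow> real" where
  "dseq Ys Z n = min (diameter (Z n))
      (Min ((\<lambda>k. setdist (Ys k) (Z k) / 3 ^ (n + 1 - k)) ` {1..n}))"

end

theory Submission
  imports Defs
begin

lemma infdist_lessE:
  fixes A :: "'a::metric_space set"
  assumes "A \<noteq> {}" "infdist x A < e"
  shows "\<exists>y\<in>A. dist x y < e"
proof -
  have "bdd_below ((\<lambda>a. dist x a) ` A)" by (rule bdd_belowI[of _ 0]) auto
  then show ?thesis using assms infdist_notempty[OF assms(1), of x]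
    by (simp add: cINF_less_iff)
qed

theorem lemma2:
  fixes X :: "'b::metric_space set" and Y :: "'a::metric_space set"
    and F :: "'a set set" and Ys :: "nat \<Rightarrow> 'a set" and Z :: "nat \<Rightarrow> 'a set"
  assumes "compact X" and "X \<noteq> {}" and "compact Y"
    and "regularizing_family X Y F"
    and "bij_betw Ys {1..} F"
    and "\<And>n. Z n \<in> F" and "inj Z"
    and "Z 1 \<noteq> Ys 1" and "diameter (Z 1) < diameter (Z 0) / 2"
    and "Z 1 \<subseteq> nbhd Y (diameter (Z 0)) (Z 0)"
    and "\<And>n. n \<ge> 1 \<Longrightarrow> Z (n + 1) \<noteq> Ys (n + 1)"
    and "\<And>n. n \<ge> 1 \<Longrightarrow> diameter (Z (n + 1)) < diameter (Z n) / 2"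
    and "\<And>n. n \<ge> 1 \<Longrightarrow> Z (n + 1) \<subseteq> nbhd Y (dseq Ys Z n) (Z n)"
  shows "\<exists>p. sets_converge_to Z p \<and> p \<in> Y - \<Union>F"
proof -
  note rf = assms(4)[unfolded regularizing_family_def]
  have Fc: "compact A" "A \<noteq> {}" "A \<subseteq> Y" if "A \<in> F" for A
    using rf that assms(1,2) homeomorphic_compactness homeomorphic_empty by metis+
  have Zc: "compact (Z n)" "Z n \<noteq> {}" "Z n \<subseteq> Y" "bounded (Z n)" for n
  proof -
    show c: "compact (Z n)" by (rule Fc(1)[OF assms(6)])
    show "Z n \<noteq> {}" by (rule Fc(2)[OF assms(6)])
    show "Z n \<subseteq> Y" by (rule Fc(3)[OF assms(6)])
    show "bounded (Z n)" by (rule compact_imp_bounded[OF c])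
  qed
  define D where "D = diameter (Z 0)"
  have D0: "0 < D" using assms(9) diameter_ge_0[OF Zc(4)[of 1]] unfolding D_def by linarith
  have diam: "diameter (Z n) \<le> D * (1/2)^n" for n
  proof (induction n rule: nat_less_induct)
    case (1 n)
    show ?case
    proof (cases n)
      case 0 then show ?thesis by (simp add: D_def)
    next
      case (Suc k)
      show ?thesis
      proof (cases k)
        case 0 then show ?thesis using Suc assms(9) by (simp add: D_def)
      next
        case (Suc j)
        have "diameter (Z (k+1)) < diameter (Z k) / 2" using assms(12)[of k] Suc by simp
        moreover have "diameter (Z k) \<le> D * (1/2)^k" using 1 \<open>n = Suc k\<close> by simp
        ultimately show ?thesis using \<open>n = Suc k\<close> by simp
      qed
    qed
  qed
  have dseq_le: "dseq Ys Z n \<le> diameter (Z n)" for n unfolding dseq_def by simp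
  have step: "\<exists>y\<in>Z n. dist x y < diameter (Z n)" if "x \<in> Z (Suc n)" for n x
  proof -
    have "infdist x (Z n) < diameter (Z n)"
    proof (cases n)
      case 0 then show ?thesis using that assms(10) by (auto simp: nbhd_def)
    next
      case (Suc k)
      then have "x \<in> nbhd Y (dseq Ys Z n) (Z n)" using assms(13)[of n] that by auto
      then show ?thesis using dseq_le[of n] by (auto simp: nbhd_def)
    qed
    then show ?thesis by (rule infdist_lessE[OF Zc(2)])
  qed
  have dstep: "dist (q n) (q (Suc n)) \<le> 2 * D * (1/2)^n" if q: "\<And>n. q n \<in> Z n" for q n
  proof -
    obtain y where y: "y \<in> Z n" "dist (q (Suc n)) y < diameter (Z n)" using step[OF q[of "Suc n"]] by blast
    have "dist (q n) y \<le> diameter (Z n)" by (rule diameter_bounded_bound[OF Zc(4) q y(1)])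
    then have "dist (q n) (q (Suc n)) \<le> 2 * diameter (Z n)"
      using y dist_triangle[of "q n" "q (Suc n)" y] by (simp add: dist_commute)
    then show ?thesis using diam[of n] by simp
  qed
  have dchain: "dist (q n) (q (n+k)) \<le> 4 * D * (1/2)^n - 4 * D * (1/2)^(n+k)"
    if q: "\<And>n. q n \<in> Z n" for q n k
  proof (induction k)
    case 0 then show ?case by simp
  next
    case (Suc k)
    have "dist (q n) (q (n + Suc k)) \<le> dist (q n) (q (n+k)) + dist (q (n+k)) (q (Suc (n+k)))"
      using dist_triangle by simp
    also have "\<dots> \<le> 4 * D * (1/2)^n - 4 * D * (1/2)^(n+k) + 2 * D * (1/2)^(n+k)"
      using Suc dstep[OF q, of "n+k"] by simp
    also have "\<dots> = 4 * D * (1/2)^n - 4 * D * (1/2)^(n + Suc k)" by simp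
    finally show ?case .
  qed
  have dle: "dist (q n) (q m) \<le> 4 * D * (1/2)^n" if q: "\<And>n. q n \<in> Z n" and "n \<le> m" for q n m
  proof -
    obtain k where "m = n + k" using le_Suc_ex[OF \<open>n \<le> m\<close>] by blast
    moreover have "0 \<le> 4 * D * (1/2::real)^(n+k)" using D0 by simp
    then have "dist (q n) (q (n+k)) \<le> 4 * D * (1/2)^n" using dchain[OF q, of n k] by linarith
    ultimately show ?thesis by simp
  qed
  define q0 where "q0 n = (SOME x. x \<in> Z n)" for n
  have q0: "q0 n \<in> Z n" for n unfolding q0_def using Zc(2) by (simp add: some_in_eq)
  have "Cauchy q0"
  proof (rule metric_CauchyI)
    fix e :: real assume "0 < e"
    obtain M where M: "(1/2::real)^M < e / (8*D)" using real_arch_pow_inv[of "e/(8*D)" "1/2"] \<open>0<e\<close> D0 by auto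
    have "dist (q0 m) (q0 n) < e" if "m \<ge> M" "n \<ge> M" for m n
    proof -
      have "dist (q0 m) (q0 n) \<le> dist (q0 M) (q0 m) + dist (q0 M) (q0 n)"
        using dist_triangle3 by metis
      also have "\<dots> \<le> 8 * D * (1/2)^M" using dle[OF q0, of M m] dle[OF q0, of M n] that by simp
      also have "\<dots> < e" using M D0 by (simp add: field_simps)
      finally show ?thesis .
    qed
    then show "\<exists>M. \<forall>m\<ge>M. \<forall>n\<ge>M. dist (q0 m) (q0 n) < e" by blast
  qed
  moreover have "complete Y" using assms(3) compact_imp_complete by blast
  ultimately obtain p where p: "p \<in> Y" "q0 \<longlonglongrightarrow> p"
    unfolding complete_def using q0 Zc(3) by blast
  have conv: "sets_converge_to Z p"
    unfolding sets_converge_to_def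
  proof (intro allI impI)
    fix q assume q: "\<forall>n. q n \<in> Z n"
    have "((\<lambda>n. dist (q n) p) \<longlongrightarrow> 0) sequentially"
    proof (rule Lim_null_comparison)
      show "\<forall>\<^sub>F n in sequentially. norm (dist (q n) p) \<le> D * (1/2)^n + dist (q0 n) p"
      proof (rule always_eventually, rule allI)
        fix n
        have "dist (q n) (q0 n) \<le> diameter (Z n)" using q by (intro diameter_bounded_bound[OF Zc(4) _ q0]) blast
        then show "norm (dist (q n) p) \<le> D * (1/2)^n + dist (q0 n) p"
          using diam[of n] dist_triangle[of "q n" p "q0 n"] by simp
      qed
      have "(\<lambda>n. D * (1/2::real)^n) \<longlonglongrightarrow> D * 0"
        by (intro tendsto_mult tendsto_const LIMSEQ_power_zero) simp
      moreover have "(\<lambda>n. dist (q0 n) p) \<longlonglongrightarrow> 0" using p(2) tendsto_dist_iff by blast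
      ultimately show "(\<lambda>n. D * (1/2)^n + dist (q0 n) p) \<longlonglongrightarrow> 0"
        using tendsto_add[of _ 0 _ _ 0] by fastforce
    qed
    then show "q \<longlonglongrightarrow> p" using tendsto_dist_iff by blast
  qed
  have notin: "p \<notin> \<Union>F"
  proof
    assume "p \<in> \<Union>F"
    then obtain A where A: "A \<in> F" "p \<in> A" by blast
    then obtain m where m: "m \<ge> 1" "A = Ys m" using assms(5) unfolding bij_betw_def by auto
    have "Z m \<noteq> Ys m"
    proof (cases "m = 1")
      case True then show ?thesis using assms(8) by simp
    next
      case False
      then have "m - 1 \<ge> 1" "m - 1 + 1 = m" using m by auto
      then show ?thesis using assms(11)[of "m-1"] by simp
    qed
    then have "disjnt (Ys m) (Z m)" using rf A m assms(6) unfolding pairwise_def by metis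
    then have "setdist (Ys m) (Z m) \<noteq> 0"
    proof -
      have "compact (Ys m)" "Ys m \<noteq> {}" using Fc A m by auto
      moreover have "closed (Z m)" by (rule compact_imp_closed[OF Zc(1)])
      ultimately show ?thesis
        using setdist_eq_0_compact_closed[of "Ys m" "Z m"] Zc(2)[of m] \<open>disjnt (Ys m) (Z m)\<close>
        by (auto simp: disjnt_def)
    qed
    then have d0: "0 < setdist (Ys m) (Z m)" using setdist_pos_le[of "Ys m" "Z m"] by linarith
    define \<delta> where "\<delta> = setdist (Ys m) (Z m)"
    have bound: "\<forall>x\<in>Z (m+k). infdist x (Z m) \<le> \<delta>/2 - \<delta>/(2*3^k)" for k
    proof (induction k)
      case 0 then show ?case by simp
    next
      case (Suc k)
      show ?case
      proof
        fix x assume x: "x \<in> Z (m + Suc k)"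
        let ?n = "m + k"
        have "x \<in> nbhd Y (dseq Ys Z ?n) (Z ?n)" using assms(13)[of ?n] x m by auto
        then have i1: "infdist x (Z ?n) < dseq Ys Z ?n" by (simp add: nbhd_def)
        have "dseq Ys Z ?n \<le> setdist (Ys m) (Z m) / 3 ^ (?n + 1 - m)"
          unfolding dseq_def
        proof (intro min.coboundedI2 Min_le)
          show "finite ((\<lambda>k. setdist (Ys k) (Z k) / 3 ^ (?n + 1 - k)) ` {1..?n})" by simp
          show "setdist (Ys m) (Z m) / 3 ^ (?n + 1 - m) \<in> (\<lambda>k. setdist (Ys k) (Z k) / 3 ^ (?n + 1 - k)) ` {1..?n}"
            using m by (intro imageI) simp
        qed
        then have "dseq Ys Z ?n \<le> \<delta> / (3 * 3^k)" by (simp add: \<delta>_def)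
        then obtain y where y: "y \<in> Z ?n" "dist x y < \<delta> / (3 * 3^k)"
          using infdist_lessE[OF Zc(2) ] i1 by (meson less_le_trans)
        have "infdist x (Z m) \<le> infdist y (Z m) + dist x y"
          using infdist_triangle[of x "Z m" y] by (simp add: dist_commute)
        also have "\<dots> \<le> \<delta>/2 - \<delta>/(2*3^k) + \<delta> / (3 * 3^k)" proof -
          have "infdist y (Z m) \<le> \<delta>/2 - \<delta>/(2*3^k)" using Suc.IH y(1) by blast
          then show ?thesis using y(2) by linarith
        qed
        also have "\<dots> = \<delta>/2 - \<delta>/(2*3^Suc k)" by (simp add: field_simps)
        finally show "infdist x (Z m) \<le> \<delta>/2 - \<delta>/(2*3^Suc k)" .
      qed
    qed
    have "infdist (q0 n) (Z m) \<le> \<delta>/2" if nm: "n \<ge> m" for n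
    proof -
      obtain k where nk: "n = m + k" using le_Suc_ex[OF nm] by blast
      have nn: "0 \<le> \<delta>/(2*3^k)" using d0 \<delta>_def by simp
      have "q0 n \<in> Z (m+k)" using q0[of n] nk by simp
      then have "infdist (q0 n) (Z m) \<le> \<delta>/2 - \<delta>/(2*3^k)"
        using bound[of k] by blast
      then show ?thesis using nn by linarith
    qed
    then have "infdist p (Z m) \<le> \<delta>/2"
      using LIMSEQ_le_const2[OF tendsto_infdist[OF p(2)]] by blast
    moreover have "\<delta> \<le> infdist p (Z m)"
      using setdist_le_sing[of p "Ys m" "Z m"] A m by (simp add: \<delta>_def infdist_eq_setdist)
    ultimately show False using d0 \<delta>_def by simp
  qed
  show ?thesis using conv notin p(1) by blast
qed

end
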